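(* Let $q\ge2$, $n\ge1$, $P=2\lceil\log_q n+\log_q\log_q n\rceil+1$, and let $p$ be the smallest prime with $p\ge\max\{P,q\}$. Let $a_0\in[0,3(q-1)]$ and $a_1,a_2\in[0,p-1]$, and let $\mathcal{C}_{q,4,P}=\{\boldsymbol{z}\in\Sigma_q^n:\mathrm{VT}^{(0)}(\boldsymbol{z})\equiv a_0\pmod{3(q-1)+1},\ \mathrm{VT}^{(1)}(\boldsymbol{z})\equiv a_1\pmod p,\ \mathrm{VT}^{(2)}(\boldsymbol{z})\equiv a_2\pmod p\}$. Then the code $$\mathcal{C}=\{\boldsymbol{x}\in\mathcal{ALL}(n,\tfrac{P-1}{2}):\ \mathbf{1}(\boldsymbol{x})\in\mathcal{C}_{q,4,P}\}$$ is a $2$-read $(n,4)_q$-code. Moreover, there exists a choice of $a_0,a_1,a_2$ such that $r(\mathcal{C})\le2\log_q\log_q n+\log_q(3(q-1)+1)+2\log_q4+o(1)$ as $n\to\infty$.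
   Context: $\Sigma_q=\{0,\dots,q-1\}$. For $\boldsymbol{x}\in\Sigma_q^n$, $x[i]$ is its $i$-th entry, with $x[i]=0$ for $i\notin[1,n]$. $\mathrm{VT}^{(k)}(\boldsymbol{z})=\sum_{i=1}^n i^kz[i]$. The indicator sequence $\mathbf{1}(\boldsymbol{x})\in\Sigma_q^n$ is given by $\mathbf{1}(\boldsymbol{x})[i]=x[i]+x[i-1]\bmod q$ for $i\in[1,n]$. A sequence is alternating if it has the form $abab\cdots$ for distinct symbols $a,b$; $\mathcal{ALL}(n,L)$ is the set of $\boldsymbol{x}\in\Sigma_q^n$ all of whose alternating substrings (contiguous blocks) have length at most $L$. $\mathcal{R}(\boldsymbol{x})$ is the length-$(n+1)$ vector whose $i$-th entry is the multiset $\{\{x[i-1],x[i]\}\}$; $\mathcal{C}$ is a $2$-read $(n,d)_q$-code if $d_H(\mathcal{R}(\boldsymbol{x}),\mathcal{R}(\boldsymbol{y}))\ge d$ for distinct $\boldsymbol{x},\boldsymbol{y}\in\mathcal{C}$ ($d_H$ = Hamming distance). Redundancy: $r(\mathcal{C})=n-\log_q|\mathcal{C}|$. *)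

theory Defs
  imports Complex_Main "HOL-Library.Multiset" "HOL-Computational_Algebra.Primes"
begin

text \<open>Sequences in Sigma_q^n are functions nat => nat, indexed 1..n, zero outside [1,n].\<close>
definition seqs :: "nat \<Rightarrow> nat \<Rightarrow> (nat \<Rightarrow> nat) set" where
  "seqs q n = {x. (\<forall>i. x i < q) \<and> (\<forall>i. (i < 1 \<or> n < i) \<longrightarrow> x i = 0)}"

definition VT :: "nat \<Rightarrow> nat \<Rightarrow> (nat \<Rightarrow> nat) \<Rightarrow> nat" where
  "VT k n z = (\<Sum>i=1..n. i ^ k * z i)"

definition indic :: "nat \<Rightarrow> nat \<Rightarrow> (nat \<Rightarrow> nat) \<Rightarrow> (nat \<Rightarrow> nat)" where
  "indic q n x = (\<lambda>i. if 1 \<le> i \<and> i \<le> n then (x i + x (i - 1)) mod q else 0)"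

definition alternating_block :: "(nat \<Rightarrow> nat) \<Rightarrow> nat \<Rightarrow> nat \<Rightarrow> bool" where
  "alternating_block x i m =
     (\<exists>a b. a \<noteq> b \<and> (\<forall>t<m. x (i + t) = (if even t then a else b)))"

definition ALL_set :: "nat \<Rightarrow> nat \<Rightarrow> nat \<Rightarrow> (nat \<Rightarrow> nat) set" where
  "ALL_set q n L = {x \<in> seqs q n. \<forall>i m. 1 \<le> i \<and> 1 \<le> m \<and> i + m - 1 \<le> n
        \<and> alternating_block x i m \<longrightarrow> m \<le> L}"

definition read2 :: "(nat \<Rightarrow> nat) \<Rightarrow> nat \<Rightarrow> nat multiset" where
  "read2 x i = {# x (i - 1), x i #}"

definition read_dist :: "nat \<Rightarrow> (nat \<Rightarrow> nat) \<Rightarrow> (nat \<Rightarrow> nat) \<Rightarrow> nat" where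
  "read_dist n x y = card {i \<in> {1..n+1}. read2 x i \<noteq> read2 y i}"

definition is_2read_code :: "nat \<Rightarrow> nat \<Rightarrow> nat \<Rightarrow> (nat \<Rightarrow> nat) set \<Rightarrow> bool" where
  "is_2read_code q n d C = (C \<subseteq> seqs q n \<and>
     (\<forall>x\<in>C. \<forall>y\<in>C. x \<noteq> y \<longrightarrow> d \<le> read_dist n x y))"

definition redundancy :: "nat \<Rightarrow> nat \<Rightarrow> (nat \<Rightarrow> nat) set \<Rightarrow> real" where
  "redundancy q n C = real n - log (real q) (real (card C))"

definition Pval :: "nat \<Rightarrow> nat \<Rightarrow> int" where
  "Pval q n = 2 * \<lceil>log (real q) (real n) + log (real q) (log (real q) (real n))\<rceil> + 1"

definition pval :: "nat \<Rightarrow> nat \<Rightarrow> nat" where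
  "pval q n = (LEAST p. prime p \<and> q \<le> p \<and> Pval q n \<le> int p)"

definition Cq4P :: "nat \<Rightarrow> nat \<Rightarrow> nat \<Rightarrow> nat \<Rightarrow> nat \<Rightarrow> (nat \<Rightarrow> nat) set" where
  "Cq4P q n a0 a1 a2 = {z \<in> seqs q n.
      VT 0 n z mod (3 * (q - 1) + 1) = a0 \<and>
      VT 1 n z mod pval q n = a1 \<and>
      VT 2 n z mod pval q n = a2}"

definition code :: "nat \<Rightarrow> nat \<Rightarrow> nat \<Rightarrow> nat \<Rightarrow> nat \<Rightarrow> (nat \<Rightarrow> nat) set" where
  "code q n a0 a1 a2 =
     {x \<in> ALL_set q n (nat ((Pval q n - 1) div 2)). indic q n x \<in> Cq4P q n a0 a1 a2}"

end

theory Submission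
  imports Defs "HOL-Real_Asymp.Real_Asymp" "HOL-Library.FuncSet"
begin

lemma read_eq: "{#a, b#} = {#c, d#} \<longleftrightarrow> (a = c \<and> b = d) \<or> (a = d \<and> b = c)"
  by (auto simp: add_eq_conv_ex)

lemma read2_diff_l: assumes "x (i-1) = y (i-1)" "x i \<noteq> y i" shows "read2 x i \<noteq> read2 y i"
  using assms by (auto simp: read2_def read_eq)

lemma read2_diff_r: assumes "x (i-1) \<noteq> y (i-1)" "x i = y i" shows "read2 x i \<noteq> read2 y i"
  using assms by (auto simp: read2_def read_eq)

lemma read2_sum: assumes "read2 x i = read2 y i" shows "x (i-1) + x i = y (i-1) + y i"
  using assms by (auto simp: read2_def read_eq)

lemma alt_lemma:
  assumes mis: "\<And>t. s \<le> t \<Longrightarrow> t \<le> e \<Longrightarrow> x t \<noteq> y t"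
    and rd: "\<And>r. s < r \<Longrightarrow> r \<le> e \<Longrightarrow> read2 x r = read2 y r"
    and se: "s \<le> e"
  shows "alternating_block x s (e - s + 1)"
proof -
  have key: "s + t \<le> e \<Longrightarrow> x (s+t) = (if even t then x s else y s) \<and> y (s+t) = (if even t then y s else x s)" for t
  proof (induction t)
    case 0 then show ?case by simp
  next
    case (Suc t)
    then have IH: "x (s+t) = (if even t then x s else y s) \<and> y (s+t) = (if even t then y s else x s)" by simp
    have r: "read2 x (s + Suc t) = read2 y (s + Suc t)" using rd Suc.prems by simp
    have m: "x (s+t) \<noteq> y (s+t)" using mis Suc.prems by simp
    from r m have "x (s + Suc t) = y (s+t) \<and> y (s + Suc t) = x (s+t)"
      by (auto simp: read2_def read_eq)
    with IH show ?case by auto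
  qed
  have "x s \<noteq> y s" using mis se by auto
  moreover have "\<forall>t<e - s + 1. x (s + t) = (if even t then x s else y s)"
    using key se by auto
  ultimately show ?thesis unfolding alternating_block_def by blast
qed

lemma alg_lemma:
  fixes f :: "nat \<Rightarrow> int" and p :: nat
  assumes fin: "finite S" and cS: "card S \<le> 3" and aS: "a \<in> S" and pr: "prime p"
    and close: "\<And>t u. t \<in> S \<Longrightarrow> u \<in> S \<Longrightarrow> \<bar>int t - int u\<bar> < int p"
    and fb: "\<bar>f a\<bar> < int p"
    and s0: "(\<Sum>t\<in>S. f t) = 0"
    and s1: "int p dvd (\<Sum>t\<in>S. int t * f t)"
    and s2: "int p dvd (\<Sum>t\<in>S. (int t)^2 * f t)"
  shows "f a = 0"
proof -
  have p2: "p \<ge> 2" using pr prime_ge_2_nat by blast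
  obtain b c where sub: "S \<subseteq> {a,b,c}" and ba: "b \<noteq> a" and ca: "c \<noteq> a"
     and bcl: "\<bar>int a - int b\<bar> < int p" and ccl: "\<bar>int a - int c\<bar> < int p"
  proof -
    show ?thesis
    proof (cases "S - {a} = {}")
      case True
      show ?thesis apply (rule that[of "a+1" "a+1"]) using True p2 by auto
    next
      case False
      then obtain b where b: "b \<in> S - {a}" by blast
      show ?thesis
      proof (cases "S - {a,b} = {}")
        case True
        show ?thesis apply (rule that[of b b]) using True b close aS by auto
      next
        case False
        then obtain c where c: "c \<in> S - {a,b}" by blast
        have "{a,b,c} \<subseteq> S" using aS b c by auto
        moreover have "card {a,b,c} = 3" using b c by auto
        ultimately have "{a,b,c} = S" using card_subset_eq[OF fin] cS
          by (metis card_mono fin le_antisym)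
        then show ?thesis apply (intro that[of b c]) using b c close aS by auto
      qed
    qed
  qed
  have e1: "(\<Sum>t\<in>S. f t * ((int t - int b) * (int t - int c))) = f a * ((int a - int b) * (int a - int c))"
  proof -
    have "(\<Sum>t\<in>S. f t * ((int t - int b) * (int t - int c))) = f a * ((int a - int b) * (int a - int c)) + (\<Sum>t\<in>S-{a}. f t * ((int t - int b) * (int t - int c)))"
      using fin aS by (simp add: sum.remove)
    moreover have "(\<Sum>t\<in>S-{a}. f t * ((int t - int b) * (int t - int c))) = 0"
      apply (rule sum.neutral) using sub by auto
    ultimately show ?thesis by simp
  qed
  have e2: "(\<Sum>t\<in>S. f t * ((int t - int b) * (int t - int c))) = (\<Sum>t\<in>S. (int t)^2 * f t) - (int b + int c) * (\<Sum>t\<in>S. int t * f t) + int b * int c * (\<Sum>t\<in>S. f t)"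
    by (simp add: sum_distrib_left sum_subtractf[symmetric] sum.distrib[symmetric] algebra_simps power2_eq_square)
  have "int p dvd (\<Sum>t\<in>S. (int t)^2 * f t) - (int b + int c) * (\<Sum>t\<in>S. int t * f t) + int b * int c * (\<Sum>t\<in>S. f t)"
    using s0 s1 s2 by simp
  then have dv: "int p dvd f a * ((int a - int b) * (int a - int c))" using e1 e2 by simp
  have pri: "prime (int p)" using pr by simp
  have nb: "\<not> int p dvd (int a - int b)"
  proof
    assume "int p dvd (int a - int b)"
    moreover have "int a - int b \<noteq> 0" using ba by simp
    ultimately have "\<bar>int p\<bar> \<le> \<bar>int a - int b\<bar>" using dvd_imp_le_int by blast
    then show False using bcl by simp
  qed
  have nc: "\<not> int p dvd (int a - int c)"
  proof
    assume "int p dvd (int a - int c)"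
    moreover have "int a - int c \<noteq> 0" using ca by simp
    ultimately have "\<bar>int p\<bar> \<le> \<bar>int a - int c\<bar>" using dvd_imp_le_int by blast
    then show False using ccl by simp
  qed
  have "int p dvd f a" using dv nb nc pri by (simp add: prime_dvd_mult_iff)
  show "f a = 0"
  proof (rule ccontr)
    assume "f a \<noteq> 0"
    then have "\<bar>int p\<bar> \<le> \<bar>f a\<bar>" using \<open>int p dvd f a\<close> dvd_imp_le_int by blast
    then show False using fb by simp
  qed
qed


lemma pval_props: "prime (pval q n) \<and> q \<le> pval q n \<and> Pval q n \<le> int (pval q n)"
proof -
  obtain p where p: "prime p" "p > max q (nat (Pval q n))" using bigger_prime by blast
  then have "prime p \<and> q \<le> p \<and> Pval q n \<le> int p" by auto
  then show ?thesis unfolding pval_def by (rule LeastI)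
qed

lemma int_mod_dvd: assumes "(a::nat) mod m = b mod m" shows "int m dvd int a - int b"
proof -
  have "int a mod int m = int b mod int m" using assms by (metis of_nat_mod)
  then show ?thesis by (simp add: mod_eq_dvd_iff)
qed

lemma mod_add_inj: assumes "(a::nat) < q" "b < q" "(a + c) mod q = (b + c) mod q" shows "a = b"
proof (rule ccontr)
  assume ne: "a \<noteq> b"
  have "int q dvd int (a + c) - int (b + c)" using assms(3) by (rule int_mod_dvd)
  then have "int q dvd int a - int b" by simp
  moreover have "int a - int b \<noteq> 0" using ne by simp
  ultimately have "\<bar>int q\<bar> \<le> \<bar>int a - int b\<bar>" using dvd_imp_le_int by blast
  then show False using assms(1,2) by simp
qed

lemma VT_diff:
  assumes "S \<subseteq> {1..n}" and "\<And>t. t \<in> {1..n} - S \<Longrightarrow> z t = w t"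
  shows "int (VT k n z) - int (VT k n w) = (\<Sum>t\<in>S. (int t)^k * (int (z t) - int (w t)))"
proof -
  have "int (VT k n z) - int (VT k n w) = (\<Sum>t\<in>{1..n}. (int t)^k * (int (z t) - int (w t)))"
    unfolding VT_def by (simp add: sum_subtractf[symmetric] algebra_simps)
  also have "\<dots> = (\<Sum>t\<in>S. (int t)^k * (int (z t) - int (w t)))"
    apply (rule sum.mono_neutral_right) using assms by auto
  finally show ?thesis .
qed

lemma part1:
  assumes q2: "q \<ge> 2" and n1: "1 \<le> n"
  shows "is_2read_code q n 4 (code q n a0 a1 a2)"
proof -
  define L where "L = nat ((Pval q n - 1) div 2)"
  define p where "p = pval q n"
  have pp: "prime p" "q \<le> p" "Pval q n \<le> int p" using pval_props p_def by auto
  have sub: "code q n a0 a1 a2 \<subseteq> seqs q n" unfolding code_def ALL_set_def by auto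
  have main: "4 \<le> read_dist n x y" if xc: "x \<in> code q n a0 a1 a2" and yc: "y \<in> code q n a0 a1 a2" and xy: "x \<noteq> y" for x y
  proof (rule ccontr)
    assume "\<not> 4 \<le> read_dist n x y"
    define D where "D = {i \<in> {1..n+1}. read2 x i \<noteq> read2 y i}"
    have finD: "finite D" unfolding D_def by simp
    have cD: "card D \<le> 3" using \<open>\<not> 4 \<le> read_dist n x y\<close> unfolding read_dist_def D_def by simp
    have xs: "x \<in> seqs q n" and ys: "y \<in> seqs q n" using xc yc sub by auto
    have hALL: "\<And>i m. 1 \<le> i \<Longrightarrow> 1 \<le> m \<Longrightarrow> i + m - 1 \<le> n \<Longrightarrow> alternating_block x i m \<Longrightarrow> m \<le> L"
      using xc unfolding code_def ALL_set_def L_def by blast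
    have x0: "\<And>t. t < 1 \<or> n < t \<Longrightarrow> x t = 0" and y0: "\<And>t. t < 1 \<or> n < t \<Longrightarrow> y t = 0"
      using xs ys unfolding seqs_def by auto
    have xq: "\<And>t. x t < q" and yq: "\<And>t. y t < q" using xs ys unfolding seqs_def by auto
    define M where "M = {t. x t \<noteq> y t}"
    have Msub: "M \<subseteq> {1..n}"
    proof
      fix t assume "t \<in> M"
      then have "x t \<noteq> y t" unfolding M_def by simp
      show "t \<in> {1..n}"
      proof (rule ccontr)
        assume "t \<notin> {1..n}"
        then have "t < 1 \<or> n < t" by auto
        then have "x t = 0 \<and> y t = 0" using x0[of t] y0[of t] by simp
        then show False using \<open>x t \<noteq> y t\<close> by simp
      qed
    qed
    have finM: "finite M" using Msub finite_subset by blast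
    have Mne: "M \<noteq> {}" unfolding M_def using xy by auto
    define i0 where "i0 = Min M"
    define j0 where "j0 = Max M"
    have i0M: "i0 \<in> M" and j0M: "j0 \<in> M" unfolding i0_def j0_def using finM Mne by auto
    have i0le: "\<And>t. t \<in> M \<Longrightarrow> i0 \<le> t" and j0ge: "\<And>t. t \<in> M \<Longrightarrow> t \<le> j0"
      unfolding i0_def j0_def using finM by auto
    have i01: "1 \<le> i0" and j0n: "j0 \<le> n" and ij: "i0 \<le> j0" using i0M j0M Msub i0le by auto
    have eql: "\<And>t. t < i0 \<Longrightarrow> x t = y t" using i0le unfolding M_def by force
    have eqr: "\<And>t. j0 < t \<Longrightarrow> x t = y t" using j0ge unfolding M_def by force
    have i0D: "i0 \<in> D" unfolding D_def using i01 j0n ij i0M eql[of "i0-1"] read2_diff_l[of x i0 y]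
      unfolding M_def by auto
    have j0D: "j0+1 \<in> D" unfolding D_def using i01 j0n ij j0M eqr[of "j0+1"] read2_diff_r[of x "j0+1" y]
      unfolding M_def by auto
    have Dsub: "D \<subseteq> {i0..j0+1}"
    proof
      fix r assume rD: "r \<in> D"
      show "r \<in> {i0..j0+1}"
      proof (rule ccontr)
        assume "r \<notin> {i0..j0+1}"
        then have "(r < i0 \<and> r - 1 < i0) \<or> (j0 < r - 1 \<and> j0 < r)" by auto
        then have "x r = y r \<and> x (r-1) = y (r-1)" using eql eqr by blast
        then have "read2 x r = read2 y r" unfolding read2_def by simp
        then show False using rD unfolding D_def by auto
      qed
    qed
    have claimA: "\<And>t. i0 \<le> t \<Longrightarrow> t \<le> j0 \<Longrightarrow> x t \<noteq> y t"
    proof (rule ccontr)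
      fix t assume t: "i0 \<le> t" "t \<le> j0" "\<not> x t \<noteq> y t"
      define G where "G = {s. i0 < s \<and> s < j0 \<and> x s = y s}"
      have "t \<noteq> i0" using t(3) i0M unfolding M_def by auto
      moreover have "t \<noteq> j0" using t(3) j0M unfolding M_def by auto
      ultimately have tG: "t \<in> G" unfolding G_def using t by simp
      have finG: "finite G" unfolding G_def by simp
      define t1 where "t1 = Min G"
      define t2 where "t2 = Max G"
      have t1G: "t1 \<in> G" unfolding t1_def using finG tG by (metis Min_in empty_iff)
      have t2G: "t2 \<in> G" unfolding t2_def using finG tG by (metis Max_in empty_iff)
      have t1le: "\<And>s. s \<in> G \<Longrightarrow> t1 \<le> s" unfolding t1_def using finG by simp
      have t2ge: "\<And>s. s \<in> G \<Longrightarrow> s \<le> t2" unfolding t2_def using finG by simp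
      have t12: "t1 \<le> t2" using t1le t2G by simp
      have G1: "i0 < t1" "t1 < j0" "x t1 = y t1" using t1G unfolding G_def by auto
      have G2: "i0 < t2" "t2 < j0" "x t2 = y t2" using t2G unfolding G_def by auto
      have mt1: "x (t1-1) \<noteq> y (t1-1)"
      proof
        assume e: "x (t1-1) = y (t1-1)"
        have "t1 - 1 \<noteq> i0" using e i0M unfolding M_def by auto
        then have "t1 - 1 \<in> G" using G1 e unfolding G_def by auto
        then have "t1 \<le> t1 - 1" by (rule t1le)
        then show False using G1 by simp
      qed
      have mt2: "x (t2+1) \<noteq> y (t2+1)"
      proof
        assume e: "x (t2+1) = y (t2+1)"
        have "t2 + 1 \<noteq> j0" using e j0M unfolding M_def by auto
        then have "t2 + 1 \<in> G" using G2 e unfolding G_def by auto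
        then have "t2 + 1 \<le> t2" by (rule t2ge)
        then show False by simp
      qed
      have r1: "read2 x t1 \<noteq> read2 y t1" using read2_diff_r[of x t1 y] mt1 G1 by simp
      have r2: "read2 x (t2+1) \<noteq> read2 y (t2+1)" using read2_diff_l[of x "t2+1" y] mt2 G2 by simp
      have t1D: "t1 \<in> D" unfolding D_def using G1 j0n r1 by simp
      have t2D: "t2+1 \<in> D" unfolding D_def using G2 j0n r2 by simp
      have "{i0, t1, t2+1, j0+1} \<subseteq> D" using i0D t1D t2D j0D by simp
      moreover have "card {i0, t1, t2+1, j0+1} = 4" using G1 G2 t12 by simp
      ultimately have "4 \<le> card D" using finD card_mono by metis
      then show False using cD by simp
    qed
    define K where "K = D \<inter> {i0+1..j0}"
    have finK: "finite K" unfolding K_def by simp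
    have cK: "card K \<le> 1"
    proof -
      have "{i0, j0+1} \<union> K \<subseteq> D" using i0D j0D unfolding K_def by auto
      then have "card ({i0, j0+1} \<union> K) \<le> 3" using finD cD by (meson card_mono le_trans)
      moreover have "card ({i0, j0+1} \<union> K) = 2 + card K"
        using finK ij by (subst card_Un_disjoint) (auto simp: K_def)
      ultimately show ?thesis by simp
    qed
    have rdK: "\<And>r. i0 < r \<Longrightarrow> r \<le> j0 \<Longrightarrow> r \<notin> K \<Longrightarrow> read2 x r = read2 y r"
      using j0n unfolding K_def D_def by auto
    have span: "j0 + 1 - i0 \<le> 2 * L \<and> 1 \<le> L"
    proof (cases "K = {}")
      case True
      have "alternating_block x i0 (j0 - i0 + 1)"
        by (rule alt_lemma) (use claimA rdK True ij in auto)
      then have "j0 - i0 + 1 \<le> L" using hALL[of i0 "j0 - i0 + 1"] i01 ij j0n by auto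
      then show ?thesis using ij by auto
    next
      case False
      then obtain k where kK: "k \<in> K" by blast
      have Kk: "\<And>r. r \<in> K \<Longrightarrow> r = k" using cK finK kK by (metis card_le_Suc0_iff_eq One_nat_def)
      have k: "i0 < k" "k \<le> j0" using kK unfolding K_def by auto
      have "alternating_block x i0 (k - 1 - i0 + 1)"
      proof (rule alt_lemma)
        show "\<And>t. i0 \<le> t \<Longrightarrow> t \<le> k - 1 \<Longrightarrow> x t \<noteq> y t" using claimA k by simp
        show "\<And>r. i0 < r \<Longrightarrow> r \<le> k - 1 \<Longrightarrow> read2 x r = read2 y r"
        proof -
          fix r assume r: "i0 < r" "r \<le> k - 1"
          then have "r \<notin> K" using Kk k by fastforce
          then show "read2 x r = read2 y r" using rdK r k by simp
        qed
        show "i0 \<le> k - 1" using k by simp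
      qed
      moreover have "k - 1 - i0 + 1 = k - i0" using k by simp
      ultimately have ab1: "alternating_block x i0 (k - i0)" by simp
      have b1: "k - i0 \<le> L" apply (rule hALL[OF _ _ _ ab1]) using i01 k j0n by auto
      have ab2: "alternating_block x k (j0 - k + 1)"
      proof (rule alt_lemma)
        show "\<And>t. k \<le> t \<Longrightarrow> t \<le> j0 \<Longrightarrow> x t \<noteq> y t" using claimA k by simp
        show "\<And>r. k < r \<Longrightarrow> r \<le> j0 \<Longrightarrow> read2 x r = read2 y r"
        proof -
          fix r assume r: "k < r" "r \<le> j0"
          then have "r \<notin> K" using Kk k by fastforce
          then show "read2 x r = read2 y r" using rdK r k by simp
        qed
        show "k \<le> j0" using k by simp
      qed
      have b2: "j0 - k + 1 \<le> L" apply (rule hALL[OF _ _ _ ab2]) using i01 k j0n by auto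
      show ?thesis using b1 b2 k by auto
    qed
    have spanp: "int (j0 + 1 - i0) < int p"
    proof -
      have "1 \<le> (Pval q n - 1) div 2" using span unfolding L_def by auto
      then have "2 * int L \<le> Pval q n - 1" unfolding L_def by auto
      then show ?thesis using span pp(3) by linarith
    qed
    define z where "z = indic q n x"
    define w where "w = indic q n y"
    have zC: "z \<in> Cq4P q n a0 a1 a2" and wC: "w \<in> Cq4P q n a0 a1 a2"
      using xc yc unfolding z_def w_def code_def by auto
    define f where "f t = int (z t) - int (w t)" for t
    define S where "S = {t \<in> {1..n}. z t \<noteq> w t}"
    have finS: "finite S" unfolding S_def by simp
    have SD: "S \<subseteq> D"
    proof
      fix t assume tS: "t \<in> S"
      show "t \<in> D"
      proof (rule ccontr)
        assume "t \<notin> D"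
        then have "read2 x t = read2 y t" using tS unfolding D_def S_def by auto
        then have "x (t-1) + x t = y (t-1) + y t" by (rule read2_sum)
        then have "z t = w t" unfolding z_def w_def indic_def by (simp add: add.commute)
        then show False using tS unfolding S_def by auto
      qed
    qed
    have cS: "card S \<le> 3" using SD finD cD by (meson card_mono le_trans)
    have i0S: "i0 \<in> S"
    proof -
      have "x (i0 - 1) = y (i0 - 1)" using eql i01 by auto
      moreover have "x i0 \<noteq> y i0" using i0M unfolding M_def by auto
      moreover have zi: "z i0 = (x i0 + x (i0-1)) mod q" unfolding z_def indic_def using i01 ij j0n by simp
      moreover have wi: "w i0 = (y i0 + y (i0-1)) mod q" unfolding w_def indic_def using i01 ij j0n by simp
      ultimately have "z i0 \<noteq> w i0" using mod_add_inj[OF xq[of i0] yq[of i0], of "x (i0-1)"] by auto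
      then show ?thesis unfolding S_def using i01 ij j0n by auto
    qed
    have closeS: "\<And>t u. t \<in> S \<Longrightarrow> u \<in> S \<Longrightarrow> \<bar>int t - int u\<bar> < int p"
    proof -
      fix t u assume "t \<in> S" "u \<in> S"
      then have "t \<in> {i0..j0+1}" "u \<in> {i0..j0+1}" using SD Dsub by auto
      then show "\<bar>int t - int u\<bar> < int p" using spanp by auto
    qed
    have zq: "\<And>t. z t < q" and wq: "\<And>t. w t < q" unfolding z_def w_def indic_def using q2 by auto
    have fb: "\<And>t. \<bar>f t\<bar> \<le> int q - 1" unfolding f_def using zq wq by (smt (verit) of_nat_0_le_iff of_nat_less_iff)
    have vt: "\<And>k. int (VT k n z) - int (VT k n w) = (\<Sum>t\<in>S. (int t)^k * f t)"
      unfolding f_def by (rule VT_diff) (auto simp: S_def)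
    have d0: "int (3 * (q - 1) + 1) dvd (\<Sum>t\<in>S. f t)"
      using vt[of 0] int_mod_dvd[of "VT 0 n z" "3 * (q - 1) + 1" "VT 0 n w"] zC wC unfolding Cq4P_def by auto
    have d1: "int p dvd (\<Sum>t\<in>S. int t * f t)"
      using vt[of 1] int_mod_dvd[of "VT 1 n z" p "VT 1 n w"] zC wC unfolding Cq4P_def p_def by auto
    have d2: "int p dvd (\<Sum>t\<in>S. (int t)^2 * f t)"
      using vt[of 2] int_mod_dvd[of "VT 2 n z" p "VT 2 n w"] zC wC unfolding Cq4P_def p_def by auto
    have s0: "(\<Sum>t\<in>S. f t) = 0"
    proof (rule ccontr)
      assume ne: "(\<Sum>t\<in>S. f t) \<noteq> 0"
      have "\<bar>\<Sum>t\<in>S. f t\<bar> \<le> (\<Sum>t\<in>S. \<bar>f t\<bar>)" by (rule sum_abs)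
      also have "\<dots> \<le> (\<Sum>t\<in>S. int q - 1)" by (rule sum_mono) (rule fb)
      also have "\<dots> = int (card S) * (int q - 1)" by simp
      also have "\<dots> \<le> 3 * (int q - 1)" using cS q2 by (intro mult_right_mono) auto
      finally have "\<bar>\<Sum>t\<in>S. f t\<bar> < int (3 * (q - 1) + 1)" using q2 by (simp add: of_nat_diff)
      moreover have "\<bar>int (3 * (q - 1) + 1)\<bar> \<le> \<bar>\<Sum>t\<in>S. f t\<bar>" using d0 ne dvd_imp_le_int by blast
      ultimately show False by simp
    qed
    have "f i0 = 0"
    proof (rule alg_lemma[OF finS cS i0S pp(1) closeS _ s0 d1 d2])
      have "int q \<le> int p" using pp(2) by simp
      then show "\<bar>f i0\<bar> < int p" using fb[of i0] by linarith
    qed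
    then show False using i0S unfolding S_def f_def by auto
  qed
  show ?thesis unfolding is_2read_code_def using sub main by blast
qed

lemma div_Suc_split: "0 < (d::nat) \<Longrightarrow> Suc n div d = n div d + (if d dvd Suc n then 1 else 0)"
  by (simp add: div_Suc dvd_eq_mod_eq_0)

lemma mult_count:
  assumes p: "prime (p::nat)" and a: "0 < a" "a < p ^ B"
  shows "multiplicity p a = card {j\<in>{1..B}. p ^ j dvd a}"
proof -
  have p1: "1 < p" using p prime_gt_1_nat by blast
  then have nu: "\<not> is_unit p" by simp
  have iff: "p ^ j dvd a \<longleftrightarrow> j \<le> multiplicity p a" for j
    by (rule power_dvd_iff_le_multiplicity) (use a nu in auto)
  have "p ^ multiplicity p a dvd a" by (simp add: iff)
  then have "p ^ multiplicity p a \<le> a" using a by (intro dvd_imp_le) auto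
  then have "p ^ multiplicity p a < p ^ B" using a by linarith
  then have mB: "multiplicity p a < B" using p1 by (rule power_less_imp_less_exp[rotated])
  have "{j\<in>{1..B}. p ^ j dvd a} = {1..multiplicity p a}"
    unfolding iff using mB by auto
  then show ?thesis by simp
qed
lemma legendre:
  assumes p: "prime (p::nat)"
  shows "n < p ^ B \<Longrightarrow> multiplicity p (fact n :: nat) = (\<Sum>j\<in>{1..B}. n div p ^ j)"
proof (induction n)
  case 0
  then show ?case by simp
next
  case (Suc n)
  have pos: "\<And>j. 0 < p ^ j" using p prime_gt_0_nat by simp
  have "multiplicity p (fact (Suc n) :: nat) = multiplicity p (Suc n * fact n)"
    by (simp add: fact_Suc)
  also have "\<dots> = multiplicity p (Suc n) + multiplicity p (fact n :: nat)"
    using p by (intro prime_elem_multiplicity_mult_distrib) auto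
  also have "multiplicity p (Suc n) = card {j\<in>{1..B}. p ^ j dvd Suc n}"
    using mult_count[OF p, of "Suc n" B] Suc.prems by simp
  also have "\<dots> = (\<Sum>j\<in>{1..B}. if p ^ j dvd Suc n then 1 else 0)"
    by (simp add: sum.inter_filter[symmetric])
  also have "multiplicity p (fact n :: nat) = (\<Sum>j\<in>{1..B}. n div p ^ j)"
    using Suc by simp
  also have "(\<Sum>j\<in>{1..B}. if p ^ j dvd Suc n then 1 else 0) + (\<Sum>j\<in>{1..B}. n div p ^ j)
      = (\<Sum>j\<in>{1..B}. Suc n div p ^ j)"
    by (simp add: sum.distrib[symmetric] div_Suc_split[OF pos] add.commute)
  finally show ?case .
qed

lemma div2_bounds: "2 * (m div d) \<le> (2 * m) div (d::nat) \<and> (2 * m) div d \<le> 2 * (m div d) + 1"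
proof (cases "d = 0")
  case True then show ?thesis by simp
next
  case False
  have m: "m = d * (m div d) + m mod d" by simp
  have r: "m mod d < d" using False by simp
  have "2 * m = d * (2 * (m div d)) + 2 * (m mod d)" using m by (metis add_mult_distrib2 mult.left_commute)
  then have "(2 * m) div d = 2 * (m div d) + (2 * (m mod d)) div d" using False by simp
  moreover have "(2 * (m mod d)) div d < 2" using r by (intro less_mult_imp_div_less) simp
  moreover have "(2 * (m mod d)) div d < 2 \<Longrightarrow> (2 * (m mod d)) div d \<le> 1" by simp
  ultimately show ?thesis by simp
qed

lemma mult_central:
  assumes p: "prime (p::nat)" and B: "2 * m < p ^ B"
  shows "multiplicity p ((2*m) choose m) = (\<Sum>j\<in>{1..B}. (2*m) div p ^ j - 2 * (m div p ^ j))"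
proof -
  have mB: "m < p ^ B" using B by simp
  have f: "fact (2*m) = fact m * fact m * ((2*m) choose m :: nat)"
    using binomial_fact_lemma[of m "2*m"] by (simp add: mult_2)
  have "multiplicity p (fact (2*m) :: nat) = multiplicity p (fact m :: nat) + multiplicity p (fact m :: nat) + multiplicity p ((2*m) choose m)"
    unfolding f using p by (simp add: prime_elem_multiplicity_mult_distrib)
  then have "multiplicity p ((2*m) choose m) = (\<Sum>j\<in>{1..B}. (2*m) div p ^ j) - (\<Sum>j\<in>{1..B}. 2 * (m div p ^ j))"
    using legendre[OF p B] legendre[OF p mB] by (simp add: sum_distrib_left[symmetric])
  also have "\<dots> = (\<Sum>j\<in>{1..B}. (2*m) div p ^ j - 2 * (m div p ^ j))"
    by (rule sum_subtractf_nat[symmetric]) (use div2_bounds in blast)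
  finally show ?thesis .
qed


lemma exp_big: assumes "prime (p::nat)" shows "2 * m < p ^ (2*m+1)"
proof -
  have "2 * m + 1 < 2 ^ (2*m+1)" by (rule less_exp)
  then have "2 * m < 2 ^ (2*m+1)" by linarith
  also have "(2::nat) ^ (2*m+1) \<le> p ^ (2*m+1)" using prime_ge_2_nat[OF assms] by (rule power_mono) simp
  finally show ?thesis .
qed

lemma mult_central_terms:
  fixes m :: nat
  assumes p: "prime (p::nat)"
  defines "t \<equiv> (\<lambda>j. (2*m) div p ^ j - 2 * (m div p ^ j))"
  shows "multiplicity p ((2*m) choose m) = (\<Sum>j\<in>{1..2*m+1}. t j)"
    and "\<And>j. t j \<le> 1"
    and "\<And>j. 2 * m < p ^ j \<Longrightarrow> t j = 0"
proof -
  show "multiplicity p ((2*m) choose m) = (\<Sum>j\<in>{1..2*m+1}. t j)"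
    unfolding t_def by (rule mult_central[OF p exp_big[OF p]])
  show "\<And>j. t j \<le> 1" unfolding t_def using div2_bounds by (simp add: le_diff_conv)
  show "\<And>j. 2 * m < p ^ j \<Longrightarrow> t j = 0" unfolding t_def by simp
qed

lemma sum_if_card: "finite A \<Longrightarrow> (\<Sum>j\<in>A. if P j then 1 else 0::nat) = card {j\<in>A. P j}"
  by (simp add: sum.inter_filter[symmetric])

lemma mult_central_le_card:
  assumes p: "prime (p::nat)"
  shows "multiplicity p ((2*m) choose m) \<le> card {j\<in>{1..2*m+1}. p ^ j \<le> 2 * m}"
proof -
  define t where "t = (\<lambda>j. (2*m) div p ^ j - 2 * (m div p ^ j))"
  have "multiplicity p ((2*m) choose m) = (\<Sum>j\<in>{1..2*m+1}. t j)"
    unfolding t_def by (rule mult_central_terms(1)[OF p])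
  also have "\<dots> \<le> (\<Sum>j\<in>{1..2*m+1}. if p ^ j \<le> 2 * m then 1 else 0)"
  proof (rule sum_mono)
    fix j
    show "t j \<le> (if p ^ j \<le> 2 * m then 1 else 0)"
      using mult_central_terms(2,3)[OF p, of m j] unfolding t_def by auto
  qed
  also have "\<dots> = card {j\<in>{1..2*m+1}. p ^ j \<le> 2 * m}"
    by (rule sum_if_card) simp
  finally show ?thesis .
qed

lemma mult_central_pow:
  assumes p: "prime (p::nat)" and m: "1 \<le> m"
  shows "p ^ multiplicity p ((2*m) choose m) \<le> 2 * m"
proof (rule ccontr)
  define v where "v = multiplicity p ((2*m) choose m)"
  assume "\<not> p ^ multiplicity p ((2*m) choose m) \<le> 2 * m"
  then have big: "2 * m < p ^ v" unfolding v_def by simp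
  have p1: "1 < p" using p prime_gt_1_nat by blast
  have "{j\<in>{1..2*m+1}. p ^ j \<le> 2 * m} \<subseteq> {1..<v}"
  proof
    fix j assume "j \<in> {j\<in>{1..2*m+1}. p ^ j \<le> 2 * m}"
    then have j: "1 \<le> j" "p ^ j \<le> 2 * m" by auto
    then have "p ^ j < p ^ v" using big by linarith
    then have "j < v" using p1 by (rule power_less_imp_less_exp[rotated])
    then show "j \<in> {1..<v}" using j by simp
  qed
  then have "card {j\<in>{1..2*m+1}. p ^ j \<le> 2 * m} \<le> card {1..<v}" by (intro card_mono) auto
  also have "\<dots> < v" using big m by (cases v) auto
  finally show False using mult_central_le_card[OF p, of m] unfolding v_def by simp
qed

lemma mult_central_large:
  assumes p: "prime (p::nat)" and big: "2 * m < p * p"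
  shows "multiplicity p ((2*m) choose m) \<le> 1"
proof -
  have p1: "1 < p" using p prime_gt_1_nat by blast
  have "{j\<in>{1..2*m+1}. p ^ j \<le> 2 * m} \<subseteq> {1}"
  proof
    fix j assume "j \<in> {j\<in>{1..2*m+1}. p ^ j \<le> 2 * m}"
    then have j: "1 \<le> j" "p ^ j \<le> 2 * m" by auto
    then have "p ^ j < p ^ 2" using big by (simp add: power2_eq_square)
    then have "j < 2" using p1 by (rule power_less_imp_less_exp[rotated])
    then show "j \<in> {1}" using j by simp
  qed
  then have "card {j\<in>{1..2*m+1}. p ^ j \<le> 2 * m} \<le> card {1::nat}" by (intro card_mono) auto
  then show ?thesis using mult_central_le_card[OF p, of m] by simp
qed

lemma mult_central_zero:
  assumes p: "prime (p::nat)" and big: "2 * m < p * p" and pm: "p \<le> m" and p3: "2 * m < 3 * p"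
  shows "multiplicity p ((2*m) choose m) = 0"
proof -
  define t where "t = (\<lambda>j. (2*m) div p ^ j - 2 * (m div p ^ j))"
  have p1: "1 < p" using p prime_gt_1_nat by blast
  have "multiplicity p ((2*m) choose m) = (\<Sum>j\<in>{1..2*m+1}. t j)"
    unfolding t_def by (rule mult_central_terms(1)[OF p])
  also have "\<dots> = 0"
  proof (rule sum.neutral, rule ballI)
    fix j assume j: "j \<in> {1..2*m+1}"
    show "t j = 0"
    proof (cases "j = 1")
      case True
      have a: "(2*m) div p = 2"
      proof -
        have "2 * p \<le> 2 * m" using pm by simp
        then have "(2 * p) div p \<le> (2*m) div p" by (rule div_le_mono)
        then have "2 \<le> (2*m) div p" using p1 by simp
        moreover have "(2*m) div p < 3" using p3 p1 by (simp add: div_less_iff_less_mult mult.commute)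
        ultimately show ?thesis by simp
      qed
      have b: "m div p = 1"
      proof -
        have "p div p \<le> m div p" using pm by (rule div_le_mono)
        then have "1 \<le> m div p" using p1 by simp
        moreover have "m div p < 2" using p3 p1 pm by (simp add: div_less_iff_less_mult mult.commute)
        ultimately show ?thesis by simp
      qed
      show ?thesis unfolding t_def using True a b by simp
    next
      case False
      then have "2 \<le> j" using j by simp
      then have "p ^ 2 \<le> p ^ j" using p1 by (intro power_increasing) auto
      then have "2 * m < p ^ j" using big by (simp add: power2_eq_square)
      then show ?thesis unfolding t_def using mult_central_terms(3)[OF p] by simp
    qed
  qed
  finally show ?thesis .
qed


lemma prod_primes_dvd:
  assumes "finite A" shows "(\<forall>p\<in>A. prime p \<and> p dvd (n::nat)) \<Longrightarrow> \<Prod>A dvd n"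
  using assms
proof (induction A rule: finite_induct)
  case empty then show ?case by simp
next
  case (insert a A)
  have pa: "prime a" and an: "a dvd n" using insert.prems by auto
  have "\<Prod>A dvd n" using insert.IH insert.prems by simp
  then obtain r where r: "n = \<Prod>A * r" by (elim dvdE)
  have "\<not> a dvd \<Prod>A"
  proof
    assume "a dvd \<Prod>A"
    then obtain b where b: "b \<in> A" "a dvd b" using prime_dvd_prod_iff[OF insert.hyps(1) pa, of id] by auto
    have "prime b" using insert.prems b(1) by simp
    then have "a = b" using pa b(2) by (simp add: primes_dvd_imp_eq)
    then show False using b(1) insert.hyps(2) by simp
  qed
  then have "a dvd r" using an r pa by (simp add: prime_dvd_mult_iff)
  then obtain s where "r = a * s" by (elim dvdE)
  then have "n = (a * \<Prod>A) * s" using r by (simp add: ac_simps)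
  then show ?case using insert.hyps by simp
qed

lemma binom_odd_le: "(2*k+1) choose k \<le> 4 ^ k"
proof -
  have sym: "(2*k+1) choose (k+1) = (2*k+1) choose k"
    using binomial_symmetric[of "k+1" "2*k+1"] by simp
  have "((2*k+1) choose k) + ((2*k+1) choose (k+1)) = (\<Sum>i\<in>{k, k+1}. (2*k+1) choose i)" by simp
  also have "\<dots> \<le> (\<Sum>i\<le>2*k+1. (2*k+1) choose i)" by (rule sum_mono2) auto
  also have "\<dots> = 2 ^ (2*k+1)" by (rule choose_row_sum)
  finally have "2 * ((2*k+1) choose k) \<le> 2 * 4 ^ k" using sym by (simp add: power_mult power_add)
  then show ?thesis by simp
qed

lemma primorial_le: "\<Prod>{p::nat. prime p \<and> p \<le> x} \<le> 4 ^ x"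
proof (induction x rule: less_induct)
  case (less x)
  show ?case
  proof (cases "x \<le> 2")
    case True
    have "{p::nat. prime p \<and> p \<le> x} \<subseteq> {2}"
      using True by (auto dest: prime_gt_1_nat)
    then have "{p::nat. prime p \<and> p \<le> x} = {} \<or> {p::nat. prime p \<and> p \<le> x} = {2}" by blast
    then show ?thesis
    proof
      assume e: "{p::nat. prime p \<and> p \<le> x} = {}"
      show ?thesis unfolding e by simp
    next
      assume e: "{p::nat. prime p \<and> p \<le> x} = {2}"
      then have "2 \<in> {p::nat. prime p \<and> p \<le> x}" by simp
      then have "2 \<le> x" by simp
      then have "(4::nat) ^ 2 \<le> 4 ^ x" by (intro power_increasing) auto
      then show ?thesis unfolding e by simp
    qed
  next
    case False
    show ?thesis
    proof (cases "even x")
      case True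
      have "{p::nat. prime p \<and> p \<le> x} = {p::nat. prime p \<and> p \<le> x - 1}"
      proof -
        have "\<not> prime x"
        proof
          assume "prime x"
          then have "2 = x" using True by (intro primes_dvd_imp_eq) auto
          then show False using False by simp
        qed
        then have e: "(prime p \<and> p \<le> x) = (prime p \<and> p \<le> x - 1)" for p
          using False by (cases "p = x") auto
        show ?thesis by (simp only: e)
      qed
      then have "\<Prod>{p::nat. prime p \<and> p \<le> x} \<le> 4 ^ (x - 1)" using less.IH[of "x - 1"] False by simp
      also have "\<dots> \<le> 4 ^ x" by (intro power_increasing) auto
      finally show ?thesis .
    next
      case odd: False
      then obtain k where k: "x = 2*k+1" by (elim oddE)
      have k1: "1 \<le> k" using k False by simp
      define A where "A = {p::nat. prime p \<and> p \<le> k+1}"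
      define Mid where "Mid = {p::nat. prime p \<and> k+1 < p \<and> p \<le> 2*k+1}"
      have finA: "finite A" unfolding A_def by (rule finite_subset[of _ "{..k+1}"]) auto
      have finM: "finite Mid" unfolding Mid_def by (rule finite_subset[of _ "{..2*k+1}"]) auto
      have split: "{p::nat. prime p \<and> p \<le> x} = A \<union> Mid" unfolding A_def Mid_def k by auto
      have disj: "A \<inter> Mid = {}" unfolding A_def Mid_def by auto
      have "\<Prod>{p::nat. prime p \<and> p \<le> x} = \<Prod>A * \<Prod>Mid"
        unfolding split using finA finM disj by (rule prod.union_disjoint)
      moreover have "\<Prod>A \<le> 4 ^ (k+1)" unfolding A_def using less.IH[of "k+1"] k k1 by simp
      moreover have "\<Prod>Mid \<le> 4 ^ k"
      proof -
        have "\<Prod>Mid dvd ((2*k+1) choose k)"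
        proof (rule prod_primes_dvd[OF finM], rule ballI)
          fix p assume pM: "p \<in> Mid"
          then have pp: "prime p" and p1: "k+1 < p" and p2: "p \<le> 2*k+1" unfolding Mid_def by auto
          have f: "fact k * fact (k+1) * ((2*k+1) choose k) = (fact (2*k+1) :: nat)"
            using binomial_fact_lemma[of k "2*k+1"] by (simp add: ac_simps)
          have "p dvd (fact (2*k+1) :: nat)" using prime_dvd_fact_iff[OF pp, of "2*k+1"] p2 by (simp only:)
          then have "p dvd fact k * fact (k+1) * ((2*k+1) choose k)" using f by simp
          moreover have "\<not> p dvd fact k" using pp p1 by (simp add: prime_dvd_fact_iff)
          moreover have "\<not> p dvd (fact (k+1) :: nat)" using prime_dvd_fact_iff[OF pp, of "k+1"] p1 by (simp only:)
          ultimately have "p dvd ((2*k+1) choose k)" using pp by (simp add: prime_dvd_mult_iff)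
          then show "prime p \<and> p dvd ((2*k+1) choose k)" using pp by simp
        qed
        moreover have "0 < ((2*k+1) choose k)" by simp
        ultimately have "\<Prod>Mid \<le> ((2*k+1) choose k)" by (rule dvd_imp_le)
        also have "\<dots> \<le> 4 ^ k" by (rule binom_odd_le)
        finally show ?thesis .
      qed
      ultimately have "\<Prod>{p::nat. prime p \<and> p \<le> x} \<le> 4 ^ (k+1) * 4 ^ k" by (simp add: mult_le_mono)
      also have "\<dots> = 4 ^ x" unfolding k by (simp add: power_add[symmetric])
      finally show ?thesis .
    qed
  qed
qed


lemma bertrand_ev: "\<exists>M0::nat. \<forall>m\<ge>M0. \<exists>p::nat. prime p \<and> m < p \<and> p \<le> 2*m"
proof -
  have "eventually (\<lambda>x::real. 2*x*(2*x) powr sqrt(2*x) * 4 powr (2*x/3) < 4 powr x) at_top"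
    by real_asymp
  then obtain X0 where X0: "\<And>x. x \<ge> X0 \<Longrightarrow> 2*x*(2*x) powr sqrt(2*x) * 4 powr (2*x/3) < 4 powr x"
    by (auto simp: eventually_at_top_linorder)
  define M0 where "M0 = max 5 (nat \<lceil>X0\<rceil>)"
  show ?thesis
  proof (rule exI[of _ M0], intro allI impI)
    fix m assume mM: "M0 \<le> m"
    have m5: "5 \<le> m" using mM unfolding M0_def by simp
    have mX: "X0 \<le> real m" using mM unfolding M0_def by linarith
    show "\<exists>p. prime p \<and> m < p \<and> p \<le> 2*m"
    proof (rule ccontr)
      assume np: "\<not> (\<exists>p. prime p \<and> m < p \<and> p \<le> 2*m)"
      define N where "N = (2*m) choose m"
      have Npos: "0 < N" unfolding N_def by simp
      define PF where "PF = prime_factors N"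
      define f where "f p = p ^ multiplicity p N" for p
      have finPF: "finite PF" unfolding PF_def by simp
      have Nprod: "N = (\<Prod>p\<in>PF. f p)" unfolding PF_def f_def using prod_prime_factors[of N] Npos by simp
      have fact_eq: "fact (2*m) = fact m * fact m * (N :: nat)"
        unfolding N_def using binomial_fact_lemma[of m "2*m"] by (simp add: mult_2)
      have PFp: "prime p \<and> 3 * p \<le> 2 * m \<and> 1 \<le> multiplicity p N" if pPF: "p \<in> PF" for p
      proof -
        have pp: "prime p" and mp: "0 < multiplicity p N"
          using pPF Npos unfolding PF_def by (auto simp: prime_factors_multiplicity)
        have pN: "p dvd N"
        proof (rule ccontr)
          assume "\<not> p dvd N"
          then have "multiplicity p N = 0" by (rule not_dvd_imp_multiplicity_0)
          then show False using mp by simp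
        qed
        have "p dvd (fact (2*m) :: nat)" unfolding fact_eq using pN by simp
        then have "p \<le> 2*m" using prime_dvd_fact_iff[OF pp] by simp
        then have pm: "p \<le> m" using np pp by (meson not_le)
        have "3 * p \<le> 2 * m"
        proof (rule ccontr)
          assume "\<not> 3 * p \<le> 2 * m"
          then have lt: "2 * m < 3 * p" by simp
          have "0 < 3 * p" using lt by linarith
          then have "(2*m) * (2*m) < (3*p) * (3*p)" using mult_strict_mono[OF lt lt] by blast
          then have a: "4*(m*m) < 9*(p*p)" by simp
          have "18 * m \<le> 4 * m * m" using m5 by (intro mult_le_mono) auto
          then have b: "18 * m \<le> 4 * (m * m)" by (simp add: mult.assoc)
          from a b have "18 * m < 9 * (p * p)" by linarith
          then have "2 * m < p * p" by linarith
          then have "multiplicity p N = 0" unfolding N_def using mult_central_zero[OF pp _ pm lt] by simp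
          then show False using mp by simp
        qed
        then show ?thesis using pp mp by simp
      qed
      define A1 where "A1 = {p\<in>PF. p * p \<le> 2 * m}"
      define A2 where "A2 = {p\<in>PF. 2 * m < p * p}"
      have finA1: "finite A1" and finA2: "finite A2" unfolding A1_def A2_def using finPF by auto
      have PFs: "PF = A1 \<union> A2" and dis: "A1 \<inter> A2 = {}" unfolding A1_def A2_def by auto
      have "N = (\<Prod>p\<in>A1. f p) * (\<Prod>p\<in>A2. f p)"
        unfolding Nprod PFs by (rule prod.union_disjoint[OF finA1 finA2 dis])
      moreover have P1: "(\<Prod>p\<in>A1. f p) \<le> (2*m) ^ card A1"
      proof -
        have "(\<Prod>p\<in>A1. f p) \<le> (\<Prod>p\<in>A1. 2*m)"
        proof (rule prod_mono)
          fix p assume "p \<in> A1"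
          then have "prime p" using PFp unfolding A1_def by auto
          then show "0 \<le> f p \<and> f p \<le> 2*m" unfolding f_def N_def using mult_central_pow[of p m] m5 by simp
        qed
        then show ?thesis by simp
      qed
      moreover have P2: "(\<Prod>p\<in>A2. f p) \<le> 4 ^ (2*m div 3)"
      proof -
        have "(\<Prod>p\<in>A2. f p) = (\<Prod>p\<in>A2. p)"
        proof (rule prod.cong[OF refl])
          fix p assume pA: "p \<in> A2"
          then have pp: "prime p" and m1: "1 \<le> multiplicity p N" and big: "2 * m < p * p"
            using PFp unfolding A2_def by auto
          have "multiplicity p N \<le> 1" unfolding N_def using mult_central_large[OF pp big] .
          then have "multiplicity p N = 1" using m1 by simp
          then show "f p = p" unfolding f_def by simp
        qed
        also have "\<dots> \<le> \<Prod>{p::nat. prime p \<and> p \<le> 2*m div 3}"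
        proof -
          have fin: "finite {p::nat. prime p \<and> p \<le> 2*m div 3}"
            by (rule finite_subset[of _ "{..2*m div 3}"]) auto
          have "A2 \<subseteq> {p::nat. prime p \<and> p \<le> 2*m div 3}"
          proof
            fix p assume "p \<in> A2"
            then have "prime p" "3 * p \<le> 2 * m" using PFp unfolding A2_def by auto
            then show "p \<in> {p::nat. prime p \<and> p \<le> 2*m div 3}" by simp
          qed
          then have "(\<Prod>p\<in>A2. p) dvd \<Prod>{p::nat. prime p \<and> p \<le> 2*m div 3}"
            using fin by (simp add: prod_dvd_prod_subset)
          moreover have "0 < \<Prod>{p::nat. prime p \<and> p \<le> 2*m div 3}"
            by (rule prod_pos) (auto dest: prime_gt_0_nat)
          ultimately show ?thesis by (rule dvd_imp_le)
        qed
        also have "\<dots> \<le> 4 ^ (2*m div 3)" by (rule primorial_le)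
        finally show ?thesis .
      qed
      ultimately have Nle: "N \<le> (2*m) ^ card A1 * 4 ^ (2*m div 3)" by (metis mult_le_mono)
      have cA1: "real (card A1) \<le> sqrt (2 * real m)"
      proof -
        define s where "s = nat \<lfloor>sqrt (2 * real m)\<rfloor>"
        have "A1 \<subseteq> {1..s}"
        proof
          fix p assume pA: "p \<in> A1"
          then have pp: "prime p" and sq: "p * p \<le> 2 * m" using PFp unfolding A1_def by auto
          have "(real p)^2 \<le> 2 * real m" using sq by (simp add: power2_eq_square flip: of_nat_mult)
          then have "real p \<le> sqrt (2 * real m)" by (rule real_le_rsqrt)
          then have "p \<le> s" unfolding s_def by (rule le_nat_floor)
          moreover have "1 \<le> p" using pp prime_gt_0_nat by (simp add: Suc_leI)
          ultimately show "p \<in> {1..s}" by simp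
        qed
        then have "card A1 \<le> s" using card_mono[of "{1..s}" A1] by simp
        moreover have "real s \<le> sqrt (2 * real m)" unfolding s_def by simp
        ultimately show ?thesis by linarith
      qed
      have "4 powr real m = real (4 ^ m)" by (simp add: powr_realpow)
      also have "real (4 ^ m) \<le> 2 * real m * real N"
        using central_binomial_lower_bound[of m] m5 unfolding N_def by (simp add: field_simps)
      also have "real N \<le> real ((2*m) ^ card A1) * real (4 ^ (2*m div 3))"
      proof -
        have "real N \<le> real ((2*m) ^ card A1 * 4 ^ (2*m div 3))" using Nle by (simp only: of_nat_le_iff)
        then show ?thesis by (simp only: of_nat_mult)
      qed
      also have "real ((2*m) ^ card A1) \<le> (2 * real m) powr sqrt (2 * real m)"
      proof -
        have "real ((2*m) ^ card A1) = (2 * real m) powr real (card A1)"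
          using m5 by (simp add: powr_realpow)
        also have "\<dots> \<le> (2 * real m) powr sqrt (2 * real m)"
          using cA1 m5 by (intro powr_mono) auto
        finally show ?thesis .
      qed
      also have "real (4 ^ (2*m div 3)) \<le> 4 powr (2 * real m / 3)"
      proof -
        have "real (4 ^ (2*m div 3)) = 4 powr real (2*m div 3)" by (simp add: powr_realpow)
        also have "\<dots> \<le> 4 powr (2 * real m / 3)"
        proof (rule powr_mono)
          have "(2*m div 3) * 3 \<le> 2 * m" by (rule div_times_less_eq_dividend)
          then have "real (2*m div 3) * 3 \<le> 2 * real m" by (simp flip: of_nat_mult)
          then show "real (2*m div 3) \<le> 2 * real m / 3" by simp
        qed simp
        finally show ?thesis .
      qed
      finally have "4 powr real m \<le> 2 * real m * ((2 * real m) powr sqrt (2 * real m) * 4 powr (2 * real m / 3))"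
        using m5 by (simp add: mult_left_mono mult_mono)
      moreover have "2 * real m * (2 * real m) powr sqrt (2 * real m) * 4 powr (2 * real m / 3) < 4 powr real m"
        using X0[OF mX] .
      ultimately show False by (simp add: mult.assoc)
    qed
  qed
qed

lemma seqs_bij: assumes q0: "0 < q" shows "bij_betw (\<lambda>x. restrict x {1..n}) (seqs q n) (PiE {1..n} (\<lambda>_. {..<q}))"
proof -
  have inj: "inj_on (\<lambda>x. restrict x {1..n}) (seqs q n)"
  proof (rule inj_onI)
    fix x y assume x: "x \<in> seqs q n" and y: "y \<in> seqs q n" and e: "restrict x {1..n} = restrict y {1..n}"
    show "x = y"
    proof (rule ext)
      fix i
      show "x i = y i"
      proof (cases "i \<in> {1..n}")
        case True
        then show ?thesis using fun_cong[OF e, of i] by simp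
      next
        case False
        then have "i < 1 \<or> n < i" by auto
        then show ?thesis using x y unfolding seqs_def by auto
      qed
    qed
  qed
  have img: "(\<lambda>x. restrict x {1..n}) ` seqs q n = PiE {1..n} (\<lambda>_. {..<q})"
  proof
    show "(\<lambda>x. restrict x {1..n}) ` seqs q n \<subseteq> PiE {1..n} (\<lambda>_. {..<q})"
      unfolding seqs_def by auto
  next
    show "PiE {1..n} (\<lambda>_. {..<q}) \<subseteq> (\<lambda>x. restrict x {1..n}) ` seqs q n"
    proof
      fix f assume f: "f \<in> PiE {1..n} (\<lambda>_. {..<q})"
      define x where "x = (\<lambda>i. if i \<in> {1..n} then f i else 0)"
      have "x \<in> seqs q n" unfolding seqs_def x_def using f q0 by auto
      moreover have "restrict x {1..n} = f"
        using f unfolding x_def by (auto simp: restrict_def PiE_def extensional_def)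
      ultimately show "f \<in> (\<lambda>x. restrict x {1..n}) ` seqs q n" by force
    qed
  qed
  show ?thesis unfolding bij_betw_def using inj img by simp
qed


lemma card_seqs: assumes "0 < q" shows "card (seqs q n) = q ^ n" and "finite (seqs q n)"
proof -
  have b: "bij_betw (\<lambda>x. restrict x {1..n}) (seqs q n) (PiE {1..n} (\<lambda>_. {..<q}))"
    using seqs_bij[OF assms] .
  have "card (seqs q n) = card (PiE {1..n} (\<lambda>_. {..<q}))" using bij_betw_same_card[OF b] .
  also have "\<dots> = q ^ n" by (simp add: card_PiE)
  finally show "card (seqs q n) = q ^ n" .
  show "finite (seqs q n)" using bij_betw_finite[OF b] by (simp add: finite_PiE)
qed

lemma card_fixed:
  assumes q0: "0 < q" and T: "T \<subseteq> {1..n}"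
  shows "card {x\<in>seqs q n. \<forall>t\<in>T. x t = c t} \<le> q ^ (n - card T)"
proof -
  define S where "S = {x\<in>seqs q n. \<forall>t\<in>T. x t = c t}"
  define g where "g = (\<lambda>x::nat\<Rightarrow>nat. restrict x {1..n})"
  have inj: "inj_on g S" unfolding g_def S_def
    using bij_betw_imp_inj_on[OF seqs_bij[OF q0]] by (rule inj_on_subset) auto
  have sub: "g ` S \<subseteq> PiE {1..n} (\<lambda>i. if i \<in> T then {c i} else {..<q})"
    unfolding g_def S_def seqs_def using T by auto
  have "card S = card (g ` S)" using card_image[OF inj] by simp
  also have "\<dots> \<le> card (PiE {1..n} (\<lambda>i. if i \<in> T then {c i} else {..<q}))"
    by (rule card_mono[OF _ sub]) (simp add: finite_PiE)
  also have "\<dots> = (\<Prod>i\<in>{1..n}. card (if i \<in> T then {c i} else {..<q}))" by (simp add: card_PiE)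
  also have "\<dots> = (\<Prod>i\<in>{1..n}. if i \<in> T then 1 else q)" by (rule prod.cong) auto
  also have "\<dots> = (\<Prod>i\<in>{1..n} \<inter> {i. i \<in> T}. 1) * (\<Prod>i\<in>{1..n} \<inter> - {i. i \<in> T}. q)"
    by (rule prod.If_cases) simp
  also have "\<dots> = q ^ card ({1..n} - T)" by (simp add: Diff_eq)
  also have "card ({1..n} - T) = n - card T" using T by (simp add: card_Diff_subset finite_subset)
  finally show ?thesis unfolding S_def .
qed

lemma bad_sub:
  assumes x: "x \<in> seqs q n - ALL_set q n L"
  shows "\<exists>i a b. i \<in> {1..n-L} \<and> a < q \<and> b < q \<and> L + 1 \<le> n \<and>
           x \<in> {x\<in>seqs q n. \<forall>t\<in>{i..i+L}. x t = (if even (t - i) then a else b)}"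
proof -
  have xs: "x \<in> seqs q n" using x by simp
  obtain i m where im: "1 \<le> i" "1 \<le> m" "i + m - 1 \<le> n" "alternating_block x i m" "\<not> m \<le> L"
    using x unfolding ALL_set_def by auto
  obtain a' b' where ab: "\<forall>t<m. x (i + t) = (if even t then a' else b')"
    using im(4) unfolding alternating_block_def by auto
  have xq: "\<And>t. x t < q" using xs unfolding seqs_def by auto
  have iL: "i + L \<le> n" using im by simp
  have mem: "\<forall>t\<in>{i..i+L}. x t = (if even (t - i) then x i else x (i+1))"
  proof
    fix t assume t: "t \<in> {i..i+L}"
    define s where "s = t - i"
    have ts: "t = i + s" and sL: "s \<le> L" using t unfolding s_def by auto
    have sm: "s < m" using sL im(5) by simp
    have xa: "x i = a'" using ab[rule_format, of 0] im(2) by simp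
    have g: "x (i + s) = (if even s then x i else x (i+1))"
    proof (cases "even s")
      case True
      then show ?thesis using ab sm xa by simp
    next
      case False
      then have "1 \<le> s" by (cases s) auto
      then have "1 < m" using sm by simp
      then have "x (i+1) = b'" using ab[rule_format, of 1] by simp
      then show ?thesis using ab sm False by simp
    qed
    then show "x t = (if even (t - i) then x i else x (i+1))" using ts by simp
  qed
  have "i \<in> {1..n-L}" using im iL by simp
  moreover have "x \<in> {x\<in>seqs q n. \<forall>t\<in>{i..i+L}. x t = (if even (t - i) then x i else x (i+1))}"
    using xs mem by simp
  moreover have "L + 1 \<le> n" using iL im(1) by simp
  ultimately show ?thesis using xq by blast
qed


lemma ALL_bound:
  assumes q0: "0 < q"
  shows "real q ^ n * (1 - real n * real q / real q ^ L) \<le> real (card (ALL_set q n L))"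
proof -
  have finS: "finite (seqs q n)" and cS: "card (seqs q n) = q ^ n" using card_seqs[OF q0] by auto
  define Bad where "Bad = seqs q n - ALL_set q n L"
  have ALLsub: "ALL_set q n L \<subseteq> seqs q n" unfolding ALL_set_def by auto
  have BadS: "Bad \<subseteq> seqs q n" unfolding Bad_def by auto
  have finBad: "finite Bad" using finS BadS finite_subset by blast
  have eqA: "ALL_set q n L = seqs q n - Bad" unfolding Bad_def using ALLsub by auto
  have cA: "card (ALL_set q n L) = q ^ n - card Bad"
    unfolding eqA using card_Diff_subset[OF finBad BadS] cS by simp
  have cBle: "card Bad \<le> q ^ n" using card_mono[OF finS BadS] cS by simp
  have rA: "real (card (ALL_set q n L)) = real q ^ n - real (card Bad)"
    using cA cBle by (simp add: of_nat_diff)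
  have qL: "0 < real q ^ L" using q0 by simp
  show ?thesis
  proof (cases "L + 1 \<le> n")
    case False
    have "Bad = {}"
    proof (rule ccontr)
      assume "Bad \<noteq> {}"
      then obtain x where "x \<in> Bad" by blast
      then show False using bad_sub[of x q n L] False unfolding Bad_def by auto
    qed
    then have "real (card (ALL_set q n L)) = real q ^ n" using rA by simp
    moreover have "0 \<le> real n * real q / real q ^ L" using qL by simp
    ultimately show ?thesis using q0 by (simp add: mult_left_le)
  next
    case True
    define F where "F = (\<lambda>(i::nat,a::nat,b::nat). {x\<in>seqs q n. \<forall>t\<in>{i..i+L}. x t = (if even (t-i) then a else b)})"
    define Ix where "Ix = {1..n-L} \<times> {..<q} \<times> {..<q}"
    have finIx: "finite Ix" unfolding Ix_def by simp
    have BadU: "Bad \<subseteq> \<Union> (F ` Ix)"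
    proof
      fix x assume "x \<in> Bad"
      then obtain i a b where "i \<in> {1..n-L}" "a < q" "b < q"
          "x \<in> {x\<in>seqs q n. \<forall>t\<in>{i..i+L}. x t = (if even (t - i) then a else b)}"
        using bad_sub[of x q n L] unfolding Bad_def by blast
      then have "(i,a,b) \<in> Ix" "x \<in> F (i,a,b)" unfolding Ix_def F_def by auto
      then show "x \<in> \<Union> (F ` Ix)" by blast
    qed
    have finF: "\<And>k. finite (F k)" unfolding F_def using finS by (auto intro: finite_subset)
    have cF: "card (F k) \<le> q ^ (n - (L+1))" if "k \<in> Ix" for k
    proof -
      obtain i a b where k: "k = (i,a,b)" by (cases k) auto
      then have i: "1 \<le> i" "i \<le> n - L" using that unfolding Ix_def by auto
      have T: "{i..i+L} \<subseteq> {1..n}" using i True by auto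
      have "card (F k) \<le> q ^ (n - card {i..i+L})"
        unfolding k F_def using card_fixed[OF q0 T] by simp
      then show ?thesis by simp
    qed
    have "card Bad \<le> card (\<Union> (F ` Ix))"
      by (rule card_mono[OF _ BadU]) (use finIx finF in auto)
    also have "\<dots> \<le> (\<Sum>k\<in>Ix. card (F k))" by (rule card_UN_le[OF finIx])
    also have "\<dots> \<le> (\<Sum>k\<in>Ix. q ^ (n - (L+1)))" by (rule sum_mono) (rule cF)
    also have "\<dots> = card Ix * q ^ (n - (L+1))" by simp
    also have "card Ix = (n - L) * q * q" unfolding Ix_def by (simp add: card_cartesian_product)
    finally have cB: "card Bad \<le> (n - L) * q * q * q ^ (n - (L+1))" .
    define Q where "Q = real q ^ (n - (L+1))"
    have rcB: "real (card Bad) \<le> real n * real q * real q * Q"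
    proof -
      have "real (card Bad) \<le> real ((n - L) * q * q * q ^ (n - (L+1)))" using cB by (simp only: of_nat_le_iff)
      also have "\<dots> = real (n - L) * real q * real q * Q" unfolding Q_def by simp
      also have "\<dots> \<le> real n * real q * real q * Q" unfolding Q_def
        by (intro mult_right_mono) auto
      finally show ?thesis .
    qed
    have qn: "real q ^ n = Q * real q * real q ^ L"
    proof -
      have "n = (n - (L+1)) + L + 1" using True by simp
      then have "real q ^ n = real q ^ ((n - (L+1)) + L + 1)" by simp
      also have "\<dots> = Q * real q * real q ^ L" unfolding Q_def by (simp add: power_add)
      finally show ?thesis .
    qed
    have "real q ^ n * (1 - real n * real q / real q ^ L) = real q ^ n - real n * real q * real q * Q"
      using qn qL by (simp add: field_simps)
    also have "\<dots> \<le> real q ^ n - real (card Bad)" using rcB by simp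
    also have "\<dots> = real (card (ALL_set q n L))" using rA by simp
    finally show ?thesis .
  qed
qed

lemma indic_seqs: "0 < q \<Longrightarrow> indic q n x \<in> seqs q n"
  unfolding indic_def seqs_def by auto

lemma pigeon:
  assumes q0: "0 < q"
  shows "\<exists>a0 a1 a2. a0 \<le> 3*(q-1) \<and> a1 \<le> pval q n - 1 \<and> a2 \<le> pval q n - 1 \<and>
    card (ALL_set q n (nat ((Pval q n - 1) div 2))) \<le> (3*(q-1)+1) * pval q n * pval q n * card (code q n a0 a1 a2)"
proof -
  define p where "p = pval q n"
  define L where "L = nat ((Pval q n - 1) div 2)"
  have p0: "0 < p" using pval_props[of q n] prime_gt_0_nat unfolding p_def by blast
  define Ix where "Ix = {..3*(q-1)} \<times> {..p-1} \<times> {..p-1}"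
  define C where "C = (\<lambda>a. code q n (fst a) (fst (snd a)) (snd (snd a)))"
  have finIx: "finite Ix" unfolding Ix_def by simp
  have neIx: "Ix \<noteq> {}" unfolding Ix_def by auto
  have cIx: "card Ix = (3*(q-1)+1) * p * p" unfolding Ix_def using p0 by (simp add: card_cartesian_product algebra_simps)
  have finS: "finite (seqs q n)" using card_seqs[OF q0] by simp
  have finC: "\<And>a. finite (C a)" unfolding C_def code_def ALL_set_def
    by (rule finite_subset[OF _ finS]) auto
  have sub: "ALL_set q n L \<subseteq> \<Union> (C ` Ix)"
  proof
    fix x assume x: "x \<in> ALL_set q n L"
    define z where "z = indic q n x"
    define a where "a = (VT 0 n z mod (3 * (q - 1) + 1), VT 1 n z mod p, VT 2 n z mod p)"
    have "a \<in> Ix" unfolding a_def Ix_def using p0 by (auto simp: less_Suc_eq_le[symmetric])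
    moreover have "x \<in> C a" unfolding C_def a_def code_def Cq4P_def z_def p_def
      using x indic_seqs[OF q0] unfolding L_def by simp
    ultimately show "x \<in> \<Union> (C ` Ix)" by blast
  qed
  obtain b where bI: "b \<in> Ix" and bmax: "\<And>a. a \<in> Ix \<Longrightarrow> card (C a) \<le> card (C b)"
  proof -
    have "Max ((\<lambda>a. card (C a)) ` Ix) \<in> (\<lambda>a. card (C a)) ` Ix" using finIx neIx by simp
    then obtain b where "b \<in> Ix" "card (C b) = Max ((\<lambda>a. card (C a)) ` Ix)" by auto
    moreover have "\<And>a. a \<in> Ix \<Longrightarrow> card (C a) \<le> Max ((\<lambda>a. card (C a)) ` Ix)" using finIx by simp
    ultimately show ?thesis using that by metis
  qed
  have "card (ALL_set q n L) \<le> card (\<Union> (C ` Ix))"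
    by (rule card_mono[OF _ sub]) (use finIx finC in auto)
  also have "\<dots> \<le> (\<Sum>a\<in>Ix. card (C a))" by (rule card_UN_le[OF finIx])
  also have "\<dots> \<le> (\<Sum>a\<in>Ix. card (C b))" by (rule sum_mono) (rule bmax)
  also have "\<dots> = card Ix * card (C b)" by simp
  finally have "card (ALL_set q n L) \<le> (3*(q-1)+1) * p * p * card (C b)" using cIx by simp
  moreover obtain b0 b1 b2 where "b = (b0, b1, b2)" by (cases b) auto
  ultimately show ?thesis using bI unfolding C_def Ix_def p_def L_def by auto
qed


definition gfun :: "real \<Rightarrow> real \<Rightarrow> real" where
  "gfun Q y = (- ln (1 - Q/y) + 2 * ln ((4*y + 4 * (ln y / ln Q) + 4) / (4*y))) / ln Q"

lemma gfun_lim: "1 < Q \<Longrightarrow> (gfun Q \<longlongrightarrow> 0) at_top"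
  unfolding gfun_def by real_asymp

lemma ell_lim: "1 < Q \<Longrightarrow> filterlim (\<lambda>n::nat. log Q (real n)) at_top at_top"
  unfolding log_def by real_asymp

lemma main_est:
  assumes q2: "q \<ge> 2"
  shows "\<exists>N0. \<forall>n\<ge>N0. \<exists>a0 a1 a2. a0 \<le> 3*(q-1) \<and> a1 \<le> pval q n - 1 \<and> a2 \<le> pval q n - 1 \<and>
     redundancy q n (code q n a0 a1 a2) \<le> 2 * log (real q) (log (real q) (real n))
        + log (real q) (real (3*(q-1)+1)) + 2 * log (real q) 4 + gfun (real q) (log (real q) (real n))"
proof -
  define Q where "Q = real q"
  have Q1: "1 < Q" and Q2: "2 \<le> Q" unfolding Q_def using q2 by auto
  have q0: "0 < q" using q2 by simp
  have lnQ: "0 < ln Q" using Q1 by simp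
  obtain M0 :: nat where M0: "\<And>m. m \<ge> M0 \<Longrightarrow> \<exists>p::nat. prime p \<and> m < p \<and> p \<le> 2*m"
    using bertrand_ev by blast
  have "eventually (\<lambda>n. 2*Q + real M0 + 1 \<le> log Q (real n)) sequentially"
    using ell_lim[OF Q1] by (simp add: filterlim_at_top)
  then obtain N0 where N0: "\<And>n. n \<ge> N0 \<Longrightarrow> 2*Q + real M0 + 1 \<le> log Q (real n)"
    by (auto simp: eventually_sequentially)
  show ?thesis
  proof (rule exI[of _ "max N0 1"], intro allI impI)
    fix n assume nN: "max N0 1 \<le> n"
    define l where "l = log Q (real n)"
    define lam where "lam = log Q l"
    have lbig: "2*Q + real M0 + 1 \<le> l" unfolding l_def using N0 nN by simp
    have n1: "1 \<le> n" using nN by simp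
    have npos: "0 < real n" using n1 by simp
    have l1: "1 \<le> l" using lbig Q1 by simp
    have lpos: "0 < l" using l1 by simp
    have lam0: "0 \<le> lam" unfolding lam_def using l1 Q1 by simp
    define c where "c = \<lceil>l + lam\<rceil>"
    have Pv: "Pval q n = 2 * c + 1" unfolding Pval_def c_def l_def lam_def Q_def by simp
    define L where "L = nat ((Pval q n - 1) div 2)"
    have c1: "1 \<le> c" unfolding c_def using l1 lam0 by linarith
    have Lc: "int L = c" unfolding L_def Pv using c1 by simp
    have rL: "real L = real_of_int c" using Lc by (metis of_int_of_nat_eq)
    have Lge: "l + lam \<le> real L" unfolding rL c_def by simp
    have Lle: "real L \<le> l + lam + 1" unfolding rL c_def by linarith
    have LM: "M0 \<le> 2 * L" using Lge lbig lam0 Q1 by linarith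
    obtain r :: nat where r: "prime r" "2 * L < r" "r \<le> 2 * (2 * L)" using M0[OF LM] by blast
    define p where "p = pval q n"
    have qL: "q \<le> L" using Lge lbig lam0 Q1 unfolding Q_def by linarith
    have pr: "p \<le> r" unfolding p_def pval_def
    proof (rule Least_le)
      show "prime r \<and> q \<le> r \<and> Pval q n \<le> int r" using r qL Pv Lc by linarith
    qed
    have pprime: "prime p" unfolding p_def using pval_props by blast
    have p2: "2 \<le> p" using pprime prime_ge_2_nat by blast
    have p4L: "real p \<le> 4 * l + 4 * lam + 4"
    proof -
      have "p \<le> 4 * L" using pr r by simp
      then have "real p \<le> 4 * real L" by simp
      then show ?thesis using Lle by linarith
    qed
    have ALLb: "Q ^ n * (1 - real n * Q / Q ^ L) \<le> real (card (ALL_set q n L))"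
      using ALL_bound[OF q0, of n L] unfolding Q_def by simp
    have QL: "real n * l \<le> Q ^ L"
    proof -
      have "Q ^ L = Q powr real L" using Q1 by (simp add: powr_realpow)
      also have "\<dots> \<ge> Q powr (l + lam)" using Lge Q1 by (intro powr_mono) auto
      also have "Q powr (l + lam) = Q powr l * Q powr lam" by (simp add: powr_add)
      also have "Q powr l = real n" unfolding l_def using Q1 npos by simp
      also have "Q powr lam = l" unfolding lam_def using Q1 lpos by simp
      finally show ?thesis by simp
    qed
    have frac: "real n * Q / Q ^ L \<le> Q / l"
    proof -
      have QLpos: "0 < Q ^ L" using Q1 by simp
      have "real n * Q / Q ^ L \<le> real n * Q / (real n * l)"
        using QL npos lpos Q1 by (intro divide_left_mono) auto
      also have "\<dots> = Q / l" using npos by simp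
      finally show ?thesis .
    qed
    have half: "Q / l \<le> 1/2" using lbig lpos Q1 by (simp add: divide_simps)
    define A where "A = Q ^ n * (1 - Q / l)"
    have h1: "0 < 1 - Q / l" using half by linarith
    have Apos: "0 < A" unfolding A_def using h1 Q1 by simp
    have ALLb2: "A \<le> real (card (ALL_set q n L))"
    proof -
      have "A \<le> Q ^ n * (1 - real n * Q / Q ^ L)" unfolding A_def using frac Q1
        by (intro mult_left_mono) auto
      then show ?thesis using ALLb by linarith
    qed
    obtain a0 a1 a2 where a: "a0 \<le> 3*(q-1)" "a1 \<le> p - 1" "a2 \<le> p - 1"
      and pig: "card (ALL_set q n L) \<le> (3*(q-1)+1) * p * p * card (code q n a0 a1 a2)"
      using pigeon[OF q0, of n] unfolding p_def L_def by blast
    define D where "D = real (3*(q-1)+1)"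
    have Dpos: "0 < D" unfolding D_def by simp
    define K where "K = A / (D * real p * real p)"
    have ppos: "0 < real p" using p2 by simp
    have Kpos: "0 < K" unfolding K_def using Apos Dpos ppos by simp
    have Kle: "K \<le> real (card (code q n a0 a1 a2))"
    proof -
      have "A \<le> D * real p * real p * real (card (code q n a0 a1 a2))"
        using ALLb2 pig unfolding D_def by (metis of_nat_le_iff of_nat_mult order_trans)
      then show ?thesis unfolding K_def using Dpos ppos by (simp add: divide_simps mult.commute mult.left_commute)
    qed
    have cpos: "0 < real (card (code q n a0 a1 a2))" using Kpos Kle by linarith
    have "log Q K \<le> log Q (real (card (code q n a0 a1 a2)))"
      using Kle Kpos cpos Q1 by simp
    moreover have "log Q K = (real n * ln Q + ln (1 - Q / l) - ln D - 2 * ln (real p)) / ln Q"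
    proof -
      have "ln K = ln A - ln (D * real p * real p)" unfolding K_def using Apos Dpos ppos by (simp add: ln_div)
      also have "ln A = real n * ln Q + ln (1 - Q / l)"
      proof -
        have "ln A = ln (Q ^ n) + ln (1 - Q / l)" unfolding A_def using Q1 h1 by (intro ln_mult_pos) auto
        moreover have "ln (Q ^ n) = real n * ln Q" using Q1 by (simp add: ln_realpow)
        ultimately show ?thesis by simp
      qed
      also have "ln (D * real p * real p) = ln D + 2 * ln (real p)" using Dpos ppos by (simp add: ln_mult)
      finally show ?thesis unfolding log_def by simp
    qed
    ultimately have red: "redundancy q n (code q n a0 a1 a2) \<le> (- ln (1 - Q / l) + ln D + 2 * ln (real p)) / ln Q"
      unfolding redundancy_def Q_def[symmetric] using lnQ by (simp add: field_simps)
    have lnp: "ln (real p) \<le> ln (4 * l + 4 * lam + 4)" using p4L ppos by simp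
    have lam_eq: "lam = ln l / ln Q" unfolding lam_def log_def ..
    have rhs: "2 * log Q l + log Q D + 2 * log Q 4 + gfun Q l = (- ln (1 - Q / l) + ln D + 2 * ln (4 * l + 4 * lam + 4)) / ln Q"
    proof -
      have pos: "0 < 4 * l + 4 * lam + 4" using lpos lam0 by simp
      have "ln ((4*l + 4 * (ln l / ln Q) + 4) / (4*l)) = ln (4 * l + 4 * lam + 4) - ln 4 - ln l"
        using pos lpos by (simp add: ln_div ln_mult lam_eq)
      then have gf: "gfun Q l = (- ln (1 - Q / l) + 2 * (ln (4 * l + 4 * lam + 4) - ln 4 - ln l)) / ln Q"
        by (simp only: gfun_def)
      have key: "\<And>x d f a X c. c \<noteq> 0 \<Longrightarrow> 2*(x/c) + d/c + 2*(f/c) + (-a + 2*(X - f - x))/c = (-a + d + 2*X)/(c::real)"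
        by (simp add: field_simps)
      show ?thesis unfolding gf log_def using lnQ by (intro key) simp
    qed
    have "redundancy q n (code q n a0 a1 a2) \<le> (- ln (1 - Q / l) + ln D + 2 * ln (4 * l + 4 * lam + 4)) / ln Q"
      using red lnp lnQ by (smt (verit) divide_right_mono)
    also have "\<dots> = 2 * log Q l + log Q D + 2 * log Q 4 + gfun Q l" using rhs by simp
    finally have fin: "redundancy q n (code q n a0 a1 a2) \<le> 2 * log Q l + log Q D + 2 * log Q 4 + gfun Q l" .
    show "\<exists>a0 a1 a2. a0 \<le> 3*(q-1) \<and> a1 \<le> pval q n - 1 \<and> a2 \<le> pval q n - 1 \<and>
     redundancy q n (code q n a0 a1 a2) \<le> 2 * log (real q) (log (real q) (real n))
        + log (real q) (real (3*(q-1)+1)) + 2 * log (real q) 4 + gfun (real q) (log (real q) (real n))"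
      using a fin unfolding p_def l_def D_def Q_def by blast
  qed
qed

theorem theorem9:
  fixes q :: nat
  assumes "q \<ge> 2"
  shows "(\<forall>n a0 a1 a2. 1 \<le> n \<and> a0 \<le> 3 * (q - 1) \<and> a1 \<le> pval q n - 1 \<and> a2 \<le> pval q n - 1
            \<longrightarrow> is_2read_code q n 4 (code q n a0 a1 a2))
       \<and> (\<exists>\<epsilon> :: nat \<Rightarrow> real. (\<epsilon> \<longlonglongrightarrow> 0) \<and>
            (\<forall>n\<ge>1. \<exists>a0 a1 a2. a0 \<le> 3 * (q - 1) \<and> a1 \<le> pval q n - 1 \<and> a2 \<le> pval q n - 1 \<and>
               redundancy q n (code q n a0 a1 a2)
                 \<le> 2 * log (real q) (log (real q) (real n)) + log (real q) (real (3 * (q - 1) + 1))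
                   + 2 * log (real q) 4 + \<epsilon> n))"
proof
  show "\<forall>n a0 a1 a2. 1 \<le> n \<and> a0 \<le> 3 * (q - 1) \<and> a1 \<le> pval q n - 1 \<and> a2 \<le> pval q n - 1
            \<longrightarrow> is_2read_code q n 4 (code q n a0 a1 a2)"
    using part1[OF assms] by blast
next
  define bnd where "bnd n = 2 * log (real q) (log (real q) (real n)) + log (real q) (real (3 * (q - 1) + 1))
                   + 2 * log (real q) 4" for n :: nat
  obtain N0 where N0: "\<And>n. n \<ge> N0 \<Longrightarrow> \<exists>a0 a1 a2. a0 \<le> 3*(q-1) \<and> a1 \<le> pval q n - 1 \<and> a2 \<le> pval q n - 1 \<and>
     redundancy q n (code q n a0 a1 a2) \<le> bnd n + gfun (real q) (log (real q) (real n))"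
    using main_est[OF assms] unfolding bnd_def by blast
  define \<epsilon> where "\<epsilon> n = (if N0 \<le> n then gfun (real q) (log (real q) (real n))
      else redundancy q n (code q n 0 0 0) - bnd n)" for n
  have Q1: "1 < real q" using assms by simp
  have lim1: "(\<lambda>n. gfun (real q) (log (real q) (real n))) \<longlonglongrightarrow> 0"
    using filterlim_compose[OF gfun_lim[OF Q1] ell_lim[OF Q1]] .
  have ev: "eventually (\<lambda>n. gfun (real q) (log (real q) (real n)) = \<epsilon> n) sequentially"
    unfolding \<epsilon>_def eventually_sequentially by auto
  have lim: "\<epsilon> \<longlonglongrightarrow> 0" using Lim_transform_eventually[OF lim1 ev] .
  have bound: "\<forall>n\<ge>1. \<exists>a0 a1 a2. a0 \<le> 3 * (q - 1) \<and> a1 \<le> pval q n - 1 \<and> a2 \<le> pval q n - 1 \<and>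
               redundancy q n (code q n a0 a1 a2) \<le> bnd n + \<epsilon> n"
  proof (intro allI impI)
    fix n :: nat assume "1 \<le> n"
    show "\<exists>a0 a1 a2. a0 \<le> 3 * (q - 1) \<and> a1 \<le> pval q n - 1 \<and> a2 \<le> pval q n - 1 \<and>
               redundancy q n (code q n a0 a1 a2) \<le> bnd n + \<epsilon> n"
    proof (cases "N0 \<le> n")
      case True
      then show ?thesis using N0[of n] unfolding \<epsilon>_def by simp
    next
      case False
      then show ?thesis unfolding \<epsilon>_def by (intro exI[of _ 0]) simp
    qed
  qed
  show "\<exists>\<epsilon> :: nat \<Rightarrow> real. (\<epsilon> \<longlonglongrightarrow> 0) \<and>
            (\<forall>n\<ge>1. \<exists>a0 a1 a2. a0 \<le> 3 * (q - 1) \<and> a1 \<le> pval q n - 1 \<and> a2 \<le> pval q n - 1 \<and>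
               redundancy q n (code q n a0 a1 a2)
                 \<le> 2 * log (real q) (log (real q) (real n)) + log (real q) (real (3 * (q - 1) + 1))
                   + 2 * log (real q) 4 + \<epsilon> n)"
    using lim bound unfolding bnd_def by blast
qed

end
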